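(* Let $X,Y$ be real Banach spaces such that $X^*$ and $Y$ have octahedral norm. Let $H$ be a closed subspace of $L(X,Y)$ such that $X^*\otimes Y\subseteq H$. Then $H$ has octahedral norm.
   Context: The norm of a Banach space $Z$ is octahedral if for every finite-dimensional subspace $E$ of $Z$ and every $\varepsilon>0$ there is $y\in S_Z$ with $\|x+\lambda y\|\ge(1-\varepsilon)(\|x\|+|\lambda|)$ for all $x\in E$ and scalars $\lambda$. $L(X,Y)$ is the space of bounded linear operators with operator norm; $X^*\otimes Y$ is the space of finite-rank operators spanned by $x\mapsto x^*(x)y$. *)

theory Defs
  imports "HOL-Analysis.Analysis"
begin

text \<open>Octahedrality of the norm of a (linear) subspace Z of a real normed space,
  with the finite-dimensional subspaces E of Z given as spans of finite sets and
  the element y taken from the unit sphere of Z.\<close>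
definition octahedral_on :: "'a::real_normed_vector set \<Rightarrow> bool" where
  "octahedral_on Z \<longleftrightarrow>
     (\<forall>F \<epsilon>. finite F \<and> F \<subseteq> Z \<and> \<epsilon> > 0 \<longrightarrow>
        (\<exists>y\<in>Z. norm y = 1 \<and>
           (\<forall>x\<in>span F. \<forall>t::real.
               norm (x + t *\<^sub>R y) \<ge> (1 - \<epsilon>) * (norm x + \<bar>t\<bar>))))"

abbreviation octahedral_norm :: "'a::real_normed_vector itself \<Rightarrow> bool" where
  "octahedral_norm _ \<equiv> octahedral_on (UNIV :: 'a set)"

definition rank_one :: "('a::real_normed_vector \<Rightarrow>\<^sub>L real) \<Rightarrow> 'b::real_normed_vector \<Rightarrow> ('a \<Rightarrow>\<^sub>L 'b)" where
  "rank_one f y = Blinfun (\<lambda>x. f x *\<^sub>R y)"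

text \<open>X^* \<otimes> Y as a subspace of L(X,Y): the span of all rank-one operators.\<close>
definition tensor_dual :: "('a::real_normed_vector \<Rightarrow>\<^sub>L 'b::real_normed_vector) set" where
  "tensor_dual = span {rank_one f y | f y. True}"

end

theory Submission
  imports Defs
begin


lemma closed_from_cball:
  fixes S :: "'a::real_normed_vector set"
  assumes "\<And>r. closed (S \<inter> cball 0 r)"
  shows "closed S"
proof -
  have "open (- S)"
    unfolding open_dist
  proof (intro ballI)
    fix x assume "x \<in> - S"
    hence "x \<notin> S \<inter> cball 0 (norm x + 1)" by auto
    moreover have "open (- (S \<inter> cball 0 (norm x + 1)))" by (intro open_Compl assms)
    ultimately obtain e where e: "e > 0" "\<forall>y. dist y x < e \<longrightarrow> y \<in> - (S \<inter> cball 0 (norm x + 1))"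
      unfolding open_dist by force
    show "\<exists>e>0. \<forall>y. dist y x < e \<longrightarrow> y \<in> - S"
    proof (intro exI[of _ "min e 1"] conjI allI impI)
      fix y assume y: "dist y x < min e 1"
      have "norm y \<le> norm x + 1" using y norm_triangle_ineq2[of y x]
        by (simp add: dist_norm)
      thus "y \<in> - S" using e y by auto
    qed (use e in auto)
  qed
  thus ?thesis by (simp add: closed_def)
qed

lemma fin_span_compact:
  fixes F :: "'a::real_normed_vector set"
  assumes "finite F"
  shows "closed (span F) \<and> (\<forall>r. compact (span F \<inter> cball 0 r))"
  using assms
proof (induction F rule: finite_induct)
  case empty
  have "span {} \<inter> cball 0 r \<subseteq> {0::'a}" for r by auto
  hence "compact (span {} \<inter> cball (0::'a) r)" for r
    by (metis compact_empty compact_sing subset_singletonD)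
  thus ?case by auto
next
  case (insert b F)
  show ?case
  proof (cases "b \<in> span F")
    case True
    thus ?thesis using insert.IH by (simp add: span_redundant)
  next
    case False
    have cl: "closed (span F)" using insert.IH by (rule conjunct1)
    define d where "d = infdist b (span F)"
    have d: "d > 0" unfolding d_def
      using infdist_pos_not_in_closed[OF cl _ False] span_zero by blast
    have cp: "compact (span (insert b F) \<inter> cball 0 r)" for r
    proof -
      define R where "R = r + r * norm b / d"
      define K where "K = (\<lambda>p. fst p *\<^sub>R b + snd p) ` ({-r/d..r/d} \<times> (span F \<inter> cball 0 R))"
      have K: "compact K" unfolding K_def
        by (intro compact_continuous_image continuous_intros compact_Times compact_Icc)
           (use insert.IH in auto)
      have "span (insert b F) \<inter> cball 0 r = K \<inter> cball 0 r"
      proof (intro equalityI subsetI)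
        fix v assume v: "v \<in> span (insert b F) \<inter> cball 0 r"
        then obtain k where k: "v - k *\<^sub>R b \<in> span F" by (auto simp: span_breakdown_eq)
        define w where "w = v - k *\<^sub>R b"
        have nv: "norm v \<le> r" using v by auto
        have kb: "\<bar>k\<bar> * d \<le> norm v"
        proof (cases "k = 0")
          case True thus ?thesis by simp
        next
          case False
          have "(- (1/k)) *\<^sub>R w \<in> span F" using k w_def span_scale by blast
          hence "d \<le> dist b ((- (1/k)) *\<^sub>R w)" unfolding d_def by (rule infdist_le)
          also have "\<dots> = norm (b + (1/k) *\<^sub>R w)" by (simp add: dist_norm)
          also have "b + (1/k) *\<^sub>R w = (1/k) *\<^sub>R v" using False
            by (simp add: w_def algebra_simps)
          finally have "d \<le> norm v / \<bar>k\<bar>" by simp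
          thus ?thesis using False by (simp add: field_simps)
        qed
        hence kr: "\<bar>k\<bar> \<le> r / d" using d nv by (simp add: field_simps)
        have "norm w \<le> norm v + \<bar>k\<bar> * norm b" unfolding w_def
          using norm_triangle_ineq4[of v "k *\<^sub>R b"] by simp
        also have "\<dots> \<le> r + r / d * norm b"
          using nv kr by (intro add_mono mult_right_mono) auto
        finally have "norm w \<le> R" unfolding R_def by simp
        hence "(k, w) \<in> {-r/d..r/d} \<times> (span F \<inter> cball 0 R)"
          using kr k w_def by auto
        moreover have "v = fst (k,w) *\<^sub>R b + snd (k,w)" by (simp add: w_def)
        ultimately show "v \<in> K \<inter> cball 0 r" unfolding K_def using v by blast
      next
        fix v assume "v \<in> K \<inter> cball 0 r"
        then obtain k w where "v = k *\<^sub>R b + w" "w \<in> span F" "norm v \<le> r"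
          unfolding K_def by auto
        moreover have "w \<in> span (insert b F)"
          using \<open>w \<in> span F\<close> span_mono[of F "insert b F"] by blast
        moreover have "k *\<^sub>R b \<in> span (insert b F)"
          by (intro span_scale span_base) simp
        ultimately show "v \<in> span (insert b F) \<inter> cball 0 r"
          using span_add by auto
      qed
      thus ?thesis using K by (simp add: compact_Int_closed)
    qed
    have "closed (span (insert b F))"
      by (rule closed_from_cball) (use cp compact_imp_closed in blast)
    thus ?thesis using cp by blast
  qed
qed



definition goodG :: "'b::real_normed_vector \<Rightarrow> ('b \<times> real) set \<Rightarrow> bool" where
  "goodG y0 G \<longleftrightarrow> (y0, norm y0) \<in> G \<and>
     (\<forall>x a b. (x,a)\<in>G \<longrightarrow> (x,b)\<in>G \<longrightarrow> a = b) \<and>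
     (\<forall>x a y b. (x,a)\<in>G \<longrightarrow> (y,b)\<in>G \<longrightarrow> (x+y,a+b)\<in>G) \<and>
     (\<forall>x a c. (x,a)\<in>G \<longrightarrow> (c *\<^sub>R x, c*a)\<in>G) \<and>
     (\<forall>x a. (x,a)\<in>G \<longrightarrow> a \<le> norm x)"

lemma goodG_D:
  assumes "goodG y0 G"
  shows goodG_y0: "(y0, norm y0) \<in> G"
    and goodG_fun: "\<And>x a b. (x,a)\<in>G \<Longrightarrow> (x,b)\<in>G \<Longrightarrow> a = b"
    and goodG_add: "\<And>x a y b. (x,a)\<in>G \<Longrightarrow> (y,b)\<in>G \<Longrightarrow> (x+y,a+b)\<in>G"
    and goodG_scale: "\<And>x a c. (x,a)\<in>G \<Longrightarrow> (c *\<^sub>R x, c*a)\<in>G"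
    and goodG_le: "\<And>x a. (x,a)\<in>G \<Longrightarrow> a \<le> norm x"
  using assms unfolding goodG_def by blast+

lemma goodG_base: "goodG y0 {(c *\<^sub>R y0, c * norm y0) | c. True}"
  unfolding goodG_def
proof (intro conjI allI impI)
  show "(y0, norm y0) \<in> {(c *\<^sub>R y0, c * norm y0) |c. True}"
    by (auto intro!: exI[of _ 1])
next
  fix x a b
  assume "(x, a) \<in> {(c *\<^sub>R y0, c * norm y0) |c. True}" "(x, b) \<in> {(c *\<^sub>R y0, c * norm y0) |c. True}"
  then obtain c c' where "x = c *\<^sub>R y0" "a = c * norm y0" "x = c' *\<^sub>R y0" "b = c' * norm y0" by blast
  thus "a = b"
  proof (cases "y0 = 0")
    case False
    hence "c = c'" using \<open>x = c *\<^sub>R y0\<close> \<open>x = c' *\<^sub>R y0\<close> by (metis scaleR_cancel_right)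
    thus ?thesis using \<open>a = c * norm y0\<close> \<open>b = c' * norm y0\<close> by simp
  qed (use \<open>a = c * norm y0\<close> \<open>b = c' * norm y0\<close> in simp)
next
  fix x a y b
  assume "(x, a) \<in> {(c *\<^sub>R y0, c * norm y0) |c. True}" "(y, b) \<in> {(c *\<^sub>R y0, c * norm y0) |c. True}"
  then obtain c c' where "x = c *\<^sub>R y0" "a = c * norm y0" "y = c' *\<^sub>R y0" "b = c' * norm y0" by auto
  thus "(x + y, a + b) \<in> {(c *\<^sub>R y0, c * norm y0) |c. True}"
    by (auto intro!: exI[of _ "c + c'"] simp: algebra_simps)
next
  fix x a d
  assume "(x, a) \<in> {(c *\<^sub>R y0, c * norm y0) |c. True}"
  then obtain c where "x = c *\<^sub>R y0" "a = c * norm y0" by auto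
  thus "(d *\<^sub>R x, d * a) \<in> {(c *\<^sub>R y0, c * norm y0) |c. True}"
    by (auto intro!: exI[of _ "d * c"])
next
  fix x a
  assume "(x, a) \<in> {(c *\<^sub>R y0, c * norm y0) |c. True}"
  then obtain c where "x = c *\<^sub>R y0" "a = c * norm y0" by auto
  thus "a \<le> norm x" by (simp add: mult_right_mono)
qed

lemma goodG_chain:
  assumes C: "C \<in> chains {G. goodG y0 G}" and ne: "C \<noteq> {}"
  shows "goodG y0 (\<Union>C)"
proof -
  have g: "\<And>G. G \<in> C \<Longrightarrow> goodG y0 G" using chainsD2[OF C] by auto
  have common: "\<exists>G\<in>C. p \<in> G \<and> q \<in> G" if hp: "p \<in> \<Union>C" and hq: "q \<in> \<Union>C" for p q
  proof -
    obtain G1 where "G1 \<in> C" "p \<in> G1" using hp by blast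
    moreover obtain G2 where "G2 \<in> C" "q \<in> G2" using hq by blast
    ultimately
    show ?thesis using chainsD[OF C, of G1 G2] by blast
  qed
  obtain G0 where "G0 \<in> C" using ne by auto
  show ?thesis
    unfolding goodG_def
  proof (intro conjI allI impI)
    show "(y0, norm y0) \<in> \<Union>C" using g[OF \<open>G0 \<in> C\<close>] \<open>G0 \<in> C\<close> unfolding goodG_def by auto
  next
    fix x a b assume "(x, a) \<in> \<Union>C" "(x, b) \<in> \<Union>C"
    then obtain G where "G \<in> C" "(x,a) \<in> G" "(x,b) \<in> G" using common by blast
    thus "a = b" using g unfolding goodG_def by blast
  next
    fix x a y b assume "(x, a) \<in> \<Union>C" "(y, b) \<in> \<Union>C"
    then obtain G where "G \<in> C" "(x,a) \<in> G" "(y,b) \<in> G" using common by blast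
    thus "(x + y, a + b) \<in> \<Union>C" using g unfolding goodG_def by blast
  next
    fix x a c assume "(x, a) \<in> \<Union>C"
    then obtain G where "G \<in> C" "(x,a) \<in> G" by blast
    thus "(c *\<^sub>R x, c * a) \<in> \<Union>C" using g unfolding goodG_def by blast
  next
    fix x a assume "(x, a) \<in> \<Union>C"
    then obtain G where "G \<in> C" "(x,a) \<in> G" by blast
    thus "a \<le> norm x" using g unfolding goodG_def by blast
  qed
qed

lemma goodG_extend:
  assumes G: "goodG y0 G" and z: "z \<notin> fst ` G"
  shows "\<exists>G'. goodG y0 G' \<and> G \<subseteq> G' \<and> G' \<noteq> G"
proof -
  note gy = goodG_y0[OF G] and gf = goodG_fun[OF G] and ga = goodG_add[OF G] and gs = goodG_scale[OF G] and gl = goodG_le[OF G]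
  have zero: "(0, 0) \<in> G" using gs[OF gy, of 0] by simp
  have neg: "(x,a) \<in> G \<Longrightarrow> (-x, -a) \<in> G" for x a
    using gs[of x a "-1"] by simp
  have bd: "a1 - norm (m1 - z) \<le> norm (m2 + z) - a2" if "(m1,a1)\<in>G" "(m2,a2)\<in>G" for m1 a1 m2 a2
  proof -
    have "(m1+m2, a1+a2) \<in> G" using ga[OF that] .
    hence "a1 + a2 \<le> norm (m1 + m2)" by (rule gl)
    also have "m1 + m2 = (m1 - z) + (m2 + z)" by simp
    also have "norm \<dots> \<le> norm (m1 - z) + norm (m2 + z)" by (rule norm_triangle_ineq)
    finally show ?thesis by simp
  qed
  define L where "L = {a - norm (m - z) | m a. (m,a) \<in> G}"
  define k where "k = Sup L"
  have Lne: "L \<noteq> {}" using zero unfolding L_def by blast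
  have Lbd: "bdd_above L" unfolding L_def bdd_above_def
    using bd zero by (intro exI[of _ "norm (0 + z) - 0"]) force
  have k1: "a - norm (m - z) \<le> k" if "(m,a)\<in>G" for m a
    unfolding k_def using that Lbd by (intro cSup_upper) (auto simp: L_def)
  have k2: "k \<le> norm (m + z) - a" if "(m,a)\<in>G" for m a
    unfolding k_def using that Lne bd by (intro cSup_least) (auto simp: L_def)
  define G' where "G' = {(m + c *\<^sub>R z, a + c * k) | m a c. (m,a) \<in> G}"
  have sub: "G \<subseteq> G'" unfolding G'_def by force
  have zG': "(z, k) \<in> G'" unfolding G'_def using zero by force
  have neq: "G' \<noteq> G" using zG' z by force
  have uniq: "c = c' \<and> m = m'" if "(m,a)\<in>G" "(m',a')\<in>G" "m + c *\<^sub>R z = m' + c' *\<^sub>R z" for m a m' a' c c'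
  proof (cases "c = c'")
    case True thus ?thesis using that by simp
  next
    case False
    have "(m + (-1) *\<^sub>R m', a + (-1) * a') \<in> G" using ga[OF that(1) gs[OF that(2)]] .
    hence h: "(m - m', a - a') \<in> G" by simp
    have "((1/(c'-c)) *\<^sub>R (m - m'), (1/(c'-c)) * (a - a')) \<in> G" using gs[OF h] .
    moreover have "(1/(c'-c)) *\<^sub>R (m - m') = z"
    proof -
      have "m - m' = (c' - c) *\<^sub>R z" using that(3) by (simp add: algebra_simps)
      thus ?thesis using False by simp
    qed
    ultimately have "z \<in> fst ` G" by force
    thus ?thesis using z by simp
  qed
  have "goodG y0 G'"
    unfolding goodG_def
  proof (intro conjI allI impI)
    show "(y0, norm y0) \<in> G'" using sub gy by blast
  next
    fix x a b assume "(x, a) \<in> G'" "(x, b) \<in> G'"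
    then obtain m1 a1 c1 m2 a2 c2 where h: "x = m1 + c1 *\<^sub>R z" "a = a1 + c1 * k" "(m1,a1)\<in>G"
      "x = m2 + c2 *\<^sub>R z" "b = a2 + c2 * k" "(m2,a2)\<in>G" unfolding G'_def by blast
    hence "c1 = c2 \<and> m1 = m2" using uniq by metis
    thus "a = b" using h gf by blast
  next
    fix x a y b assume "(x, a) \<in> G'" "(y, b) \<in> G'"
    then obtain m1 a1 c1 m2 a2 c2 where h: "x = m1 + c1 *\<^sub>R z" "a = a1 + c1 * k" "(m1,a1)\<in>G"
      "y = m2 + c2 *\<^sub>R z" "b = a2 + c2 * k" "(m2,a2)\<in>G" unfolding G'_def by blast
    have "(m1+m2, a1+a2) \<in> G" using ga h by blast
    moreover have "x + y = (m1+m2) + (c1+c2) *\<^sub>R z" "a + b = (a1+a2) + (c1+c2)*k"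
      using h by (simp_all add: algebra_simps)
    ultimately show "(x + y, a + b) \<in> G'" unfolding G'_def by blast
  next
    fix x a d assume "(x, a) \<in> G'"
    then obtain m1 a1 c1 where h: "x = m1 + c1 *\<^sub>R z" "a = a1 + c1 * k" "(m1,a1)\<in>G"
      unfolding G'_def by blast
    have "(d *\<^sub>R m1, d*a1) \<in> G" using gs h by blast
    moreover have "d *\<^sub>R x = d *\<^sub>R m1 + (d*c1) *\<^sub>R z" "d * a = d*a1 + (d*c1)*k"
      using h by (simp_all add: algebra_simps)
    ultimately show "(d *\<^sub>R x, d * a) \<in> G'" unfolding G'_def by blast
  next
    fix x a assume "(x, a) \<in> G'"
    then obtain m a1 c where h: "x = m + c *\<^sub>R z" "a = a1 + c * k" "(m,a1)\<in>G"
      unfolding G'_def by blast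
    show "a \<le> norm x"
    proof (cases c "0::real" rule: linorder_cases)
      case equal thus ?thesis using h gl by auto
    next
      case greater
      have "((1/c) *\<^sub>R m, (1/c) * a1) \<in> G" using gs h by blast
      from k2[OF this] have "k \<le> norm ((1/c) *\<^sub>R m + z) - (1/c)*a1" .
      also have "(1/c) *\<^sub>R m + z = (1/c) *\<^sub>R x" using greater h by (simp add: algebra_simps)
      finally have "k \<le> norm x / c - a1 / c" using greater by simp
      hence "c * k \<le> norm x - a1" using greater by (simp add: field_simps)
      thus ?thesis using h by simp
    next
      case less
      define d where "d = - c"
      have dp: "d > 0" using less d_def by simp
      have "((1/d) *\<^sub>R m, (1/d) * a1) \<in> G" using gs h by blast
      from k1[OF this] have "(1/d)*a1 - norm ((1/d) *\<^sub>R m - z) \<le> k" .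
      also have "(1/d) *\<^sub>R m - z = (1/d) *\<^sub>R x" using dp h by (simp add: algebra_simps d_def)
      finally have "a1 / d - norm x / d \<le> k" using dp by simp
      hence "a1 - norm x \<le> d * k" using dp by (simp add: field_simps)
      thus ?thesis using h by (simp add: d_def)
    qed
  qed
  thus ?thesis using sub neq by blast
qed

lemma norming_functional:
  fixes y0 :: "'b::real_normed_vector"
  shows "\<exists>\<phi>::'b \<Rightarrow>\<^sub>L real. norm \<phi> \<le> 1 \<and> blinfun_apply \<phi> y0 = norm y0"
proof -
  have "\<exists>M\<in>{G. goodG y0 G}. \<forall>X\<in>{G. goodG y0 G}. M \<subseteq> X \<longrightarrow> X = M"
  proof (rule Zorn_Lemma2, intro ballI)
    fix C assume C: "C \<in> chains {G. goodG y0 G}"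
    show "\<exists>U\<in>{G. goodG y0 G}. \<forall>X\<in>C. X \<subseteq> U"
    proof (cases "C = {}")
      case True thus ?thesis using goodG_base by blast
    next
      case False thus ?thesis using goodG_chain[OF C] by blast
    qed
  qed
  then obtain G where G: "goodG y0 G" and max: "\<And>X. goodG y0 X \<Longrightarrow> G \<subseteq> X \<Longrightarrow> X = G" by blast
  have dom: "\<exists>a. (x,a) \<in> G" for x
  proof (rule ccontr)
    assume "\<nexists>a. (x, a) \<in> G"
    hence "x \<notin> fst ` G" by force
    from goodG_extend[OF G this] max show False by blast
  qed
  note gy = goodG_y0[OF G] and gf = goodG_fun[OF G] and ga = goodG_add[OF G] and gs = goodG_scale[OF G] and gl = goodG_le[OF G]
  define f where "f x = (THE a. (x,a) \<in> G)" for x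
  have fG: "(x, f x) \<in> G" for x
    unfolding f_def using dom[of x] gf by (metis theI)
  have fe: "(x,a) \<in> G \<Longrightarrow> f x = a" for x a using fG gf by blast
  have lin: "linear f"
  proof
    show "f (x + y) = f x + f y" for x y using fe[OF ga[OF fG fG]] .
    show "f (c *\<^sub>R x) = c *\<^sub>R f x" for c x using fe[OF gs[OF fG]] by simp
  qed
  have nb: "norm (f x) \<le> 1 * norm x" for x
  proof -
    have "f x \<le> norm x" using gl[OF fG] .
    moreover have "(-1) * f x \<le> norm ((-1) *\<^sub>R x)" using gl[OF gs[OF fG, of "-1"]] .
    ultimately show ?thesis by auto
  qed
  have bl: "bounded_linear f"
    using lin nb by (intro bounded_linear_intro[of f 1]) (auto simp: linear_add linear_scale)
  show ?thesis
  proof (intro exI[of _ "Blinfun f"] conjI)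
    show "norm (Blinfun f) \<le> 1"
      by (rule norm_blinfun_bound) (use nb bl in \<open>auto simp: bounded_linear_Blinfun_apply\<close>)
    show "blinfun_apply (Blinfun f) y0 = norm y0"
      using bl fe[OF gy] by (simp add: bounded_linear_Blinfun_apply)
  qed
qed

lemma near_norming:
  fixes A :: "'x::real_normed_vector \<Rightarrow>\<^sub>L 'y::real_normed_vector"
  assumes "\<eta> > 0"
  shows "\<exists>x. norm x \<le> 1 \<and> norm (blinfun_apply A x) \<ge> norm A - \<eta>"
proof (rule ccontr)
  assume "\<not> ?thesis"
  hence h: "\<And>x. norm x \<le> 1 \<Longrightarrow> norm (blinfun_apply A x) < norm A - \<eta>" by force
  have nn: "0 \<le> norm A - \<eta>" using h[of 0] by simp
  have "norm (blinfun_apply A x) \<le> (norm A - \<eta>) * norm x" for x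
  proof (cases "x = 0")
    case False
    have "norm ((1/norm x) *\<^sub>R x) \<le> 1" using False by simp
    hence "norm (blinfun_apply A ((1/norm x) *\<^sub>R x)) < norm A - \<eta>" by (rule h)
    hence "norm (blinfun_apply A x) / norm x < norm A - \<eta>"
      by (simp add: blinfun.scaleR_right)
    thus ?thesis using False by (simp add: field_simps)
  qed simp
  hence "norm A \<le> norm A - \<eta>" using nn by (intro norm_blinfun_bound) auto
  thus False using assms by simp
qed

lemma apply_le:
  fixes A :: "'x::real_normed_vector \<Rightarrow>\<^sub>L 'y::real_normed_vector"
  assumes "norm x \<le> 1"
  shows "norm (blinfun_apply A x) \<le> norm A"
proof -
  have "norm (blinfun_apply A x) \<le> norm A * norm x" by (rule norm_blinfun)
  also have "\<dots> \<le> norm A * 1" using assms by (intro mult_left_mono) auto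
  finally show ?thesis by simp
qed

lemma rank_one_apply: "blinfun_apply (rank_one f y) x = blinfun_apply f x *\<^sub>R y"
proof -
  have "bounded_linear (\<lambda>x. blinfun_apply f x *\<^sub>R y)"
    by (intro bounded_linear_compose[OF bounded_linear_scaleR_left] blinfun.bounded_linear_right)
  thus ?thesis unfolding rank_one_def by (simp add: bounded_linear_Blinfun_apply)
qed

lemma rank_one_norm:
  assumes "norm f = 1" "norm y = 1"
  shows "norm (rank_one f y) = 1"
proof (rule antisym)
  show "norm (rank_one f y) \<le> 1"
    by (rule norm_blinfun_bound) (use assms norm_blinfun[of f] in \<open>auto simp: rank_one_apply\<close>)
  have "norm f \<le> norm (rank_one f y)"
  proof (rule norm_blinfun_bound)
    fix x
    have "norm (blinfun_apply (rank_one f y) x) \<le> norm (rank_one f y) * norm x" by (rule norm_blinfun)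
    thus "norm (blinfun_apply f x) \<le> norm (rank_one f y) * norm x"
      using assms by (simp add: rank_one_apply)
  qed simp
  thus "1 \<le> norm (rank_one f y)" using assms by simp
qed


theorem mainTheorem8:
  fixes H :: "('a::banach \<Rightarrow>\<^sub>L 'b::banach) set"
  assumes "octahedral_norm TYPE('a \<Rightarrow>\<^sub>L real)"
    and "octahedral_norm TYPE('b)"
    and "subspace H" and "closed H"
    and "tensor_dual \<subseteq> H"
  shows "octahedral_on H"
  unfolding octahedral_on_def
proof (intro allI impI)
  fix F :: "('a \<Rightarrow>\<^sub>L 'b) set" and \<epsilon> :: real
  assume FE: "finite F \<and> F \<subseteq> H \<and> \<epsilon> > 0"
  hence finF: "finite F" and ep: "\<epsilon> > 0" by auto
  define \<delta> where "\<delta> = min (\<epsilon>/6) (1/10)"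
  have dp: "\<delta> > 0" "\<delta> \<le> \<epsilon>/6" "\<delta> \<le> 1/10" using ep by (auto simp: \<delta>_def)
  define K0 where "K0 = span F \<inter> sphere 0 1"
  have cb: "compact (span F \<inter> cball 0 1)" using fin_span_compact[OF finF] by blast
  have cs: "closed (sphere (0::'a \<Rightarrow>\<^sub>L 'b) 1)"
  proof -
    have "sphere (0::'a \<Rightarrow>\<^sub>L 'b) 1 = cball 0 1 - ball 0 1" by auto
    thus ?thesis by (simp add: closed_Diff)
  qed
  have "K0 = (span F \<inter> cball 0 1) \<inter> sphere 0 1" unfolding K0_def by auto
  hence cK0: "compact K0" using compact_Int_closed[OF cb cs] by simp
  have "K0 \<subseteq> (\<Union>S\<in>K0. ball S \<delta>)" using dp by auto
  then obtain N where NK: "N \<subseteq> K0" and finN: "finite N" and cov: "K0 \<subseteq> (\<Union>S\<in>N. ball S \<delta>)"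
    using compactE_image[OF cK0, of K0 "\<lambda>S. ball S \<delta>"] by blast
  have nN: "norm S = 1" if "S \<in> N" for S using NK that K0_def by auto
  have ex1: "\<forall>S\<in>N. \<exists>x. norm x \<le> 1 \<and> norm (blinfun_apply S x) \<ge> 1 - \<delta>"
  proof
    fix S assume S: "S \<in> N"
    obtain x where "norm x \<le> 1" "norm (blinfun_apply S x) \<ge> norm S - \<delta>"
      using near_norming[OF dp(1), of S] by blast
    thus "\<exists>x. norm x \<le> 1 \<and> norm (blinfun_apply S x) \<ge> 1 - \<delta>" using nN[OF S] by auto
  qed
  from bchoice[OF ex1] obtain xS where xS: "\<And>S. S \<in> N \<Longrightarrow> norm (xS S) \<le> 1 \<and> norm (blinfun_apply S (xS S)) \<ge> 1 - \<delta>"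
    by blast
  have ex2: "\<forall>S\<in>N. \<exists>\<phi>::'b \<Rightarrow>\<^sub>L real. norm \<phi> \<le> 1 \<and> blinfun_apply \<phi> (blinfun_apply S (xS S)) = norm (blinfun_apply S (xS S))"
    using norming_functional by blast
  from bchoice[OF ex2] obtain phi where phi: "\<And>S. S \<in> N \<Longrightarrow> norm (phi S) \<le> 1 \<and> blinfun_apply (phi S) (blinfun_apply S (xS S)) = norm (blinfun_apply S (xS S))"
    by blast
  define g where "g S = phi S o\<^sub>L S" for S
  have gapp: "blinfun_apply (g S) x = blinfun_apply (phi S) (blinfun_apply S x)" for S x
    by (simp add: g_def)
  have gle: "norm (g S) \<le> 1" if "S \<in> N" for S
  proof -
    have "norm (g S) \<le> norm (phi S) * norm S" unfolding g_def by (rule norm_blinfun_compose)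
    also have "\<dots> \<le> 1" using phi[OF that] nN[OF that] by simp
    finally show ?thesis .
  qed
  have gge: "norm (g S) \<ge> 1 - \<delta>" if "S \<in> N" for S
  proof -
    have "1 - \<delta> \<le> blinfun_apply (g S) (xS S)" using xS[OF that] phi[OF that] gapp by simp
    also have "\<dots> \<le> norm (blinfun_apply (g S) (xS S))" by simp
    also have "\<dots> \<le> norm (g S)" using xS[OF that] by (intro apply_le) auto
    finally show ?thesis .
  qed
  obtain f :: "'a \<Rightarrow>\<^sub>L real" where nf: "norm f = 1" and
    fo: "\<forall>x\<in>span (g ` N). \<forall>t::real. norm (x + t *\<^sub>R f) \<ge> (1 - \<delta>) * (norm x + \<bar>t\<bar>)"
  proof -
    have "finite (g ` N) \<and> g ` N \<subseteq> UNIV \<and> \<delta> > 0" using finN dp by auto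
    from assms(1)[unfolded octahedral_on_def, rule_format, OF this] that show ?thesis by blast
  qed
  have ex3: "\<forall>S\<in>N. \<exists>z. norm z \<le> 1 \<and> blinfun_apply (g S) z \<ge> 1 - 4*\<delta> \<and> blinfun_apply f z \<ge> 1 - 4*\<delta>"
  proof
    fix S assume S: "S \<in> N"
    have "norm (g S + 1 *\<^sub>R f) \<ge> (1 - \<delta>) * (norm (g S) + \<bar>1\<bar>)"
      using fo S span_base[of "g S" "g ` N"] by blast
    moreover have "(1 - \<delta>) * (norm (g S) + \<bar>1\<bar>) \<ge> (1 - \<delta>) * (2 - \<delta>)"
      using gge[OF S] dp by (intro mult_left_mono) auto
    moreover have "(1 - \<delta>) * (2 - \<delta>) \<ge> 2 - 3*\<delta>" using dp by (simp add: algebra_simps)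
    ultimately have ngf: "norm (g S + f) \<ge> 2 - 3*\<delta>" by simp
    obtain x where x: "norm x \<le> 1" "norm (blinfun_apply (g S + f) x) \<ge> norm (g S + f) - \<delta>"
      using near_norming[OF dp(1)] by blast
    define z where "z = (if blinfun_apply (g S + f) x \<ge> 0 then x else - x)"
    have nz: "norm z \<le> 1" using x by (simp add: z_def)
    have hz: "blinfun_apply (g S + f) z \<ge> 2 - 4*\<delta>"
      using x ngf by (auto simp: z_def blinfun.minus_right)
    have "\<bar>blinfun_apply (g S) z\<bar> \<le> 1"
      using apply_le[OF nz, of "g S"] gle[OF S] by simp
    moreover have "\<bar>blinfun_apply f z\<bar> \<le> 1"
      using apply_le[OF nz, of f] nf by simp
    moreover have "blinfun_apply (g S + f) z = blinfun_apply (g S) z + blinfun_apply f z"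
      by (simp add: plus_blinfun.rep_eq)
    ultimately show "\<exists>z. norm z \<le> 1 \<and> blinfun_apply (g S) z \<ge> 1 - 4*\<delta> \<and> blinfun_apply f z \<ge> 1 - 4*\<delta>"
      using nz hz by (intro exI[of _ z]) auto
  qed
  from bchoice[OF ex3] obtain zS where zS: "\<And>S. S \<in> N \<Longrightarrow> norm (zS S) \<le> 1 \<and> blinfun_apply (g S) (zS S) \<ge> 1 - 4*\<delta> \<and> blinfun_apply f (zS S) \<ge> 1 - 4*\<delta>"
    by blast
  have Sz: "norm (blinfun_apply S (zS S)) \<ge> 1 - 4*\<delta>" if S: "S \<in> N" for S
  proof -
    have "1 - 4*\<delta> \<le> blinfun_apply (phi S) (blinfun_apply S (zS S))" using zS[OF S] gapp by simp
    also have "\<dots> \<le> norm (blinfun_apply (phi S) (blinfun_apply S (zS S)))" by simp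
    also have "\<dots> \<le> norm (phi S) * norm (blinfun_apply S (zS S))" by (rule norm_blinfun)
    also have "\<dots> \<le> 1 * norm (blinfun_apply S (zS S))" using phi[OF S] by (intro mult_right_mono) auto
    finally show ?thesis by simp
  qed
  obtain y :: 'b where ny: "norm y = 1" and
    yo: "\<forall>v\<in>span ((\<lambda>S. blinfun_apply S (zS S)) ` N). \<forall>s::real. norm (v + s *\<^sub>R y) \<ge> (1 - \<delta>) * (norm v + \<bar>s\<bar>)"
  proof -
    have "finite ((\<lambda>S. blinfun_apply S (zS S)) ` N) \<and> (\<lambda>S. blinfun_apply S (zS S)) ` N \<subseteq> UNIV \<and> \<delta> > 0" using finN dp by auto
    from assms(2)[unfolded octahedral_on_def, rule_format, OF this] that show ?thesis by blast
  qed
  define T where "T = rank_one f y"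
  have TH: "T \<in> H" using assms(5) unfolding T_def tensor_dual_def by (auto intro: span_base)
  have nT: "norm T = 1" unfolding T_def by (rule rank_one_norm[OF nf ny])
  have claim1: "norm (S + t *\<^sub>R T) \<ge> (1 - 5*\<delta>) * (1 + \<bar>t\<bar>)" if S: "S \<in> N" for S t
  proof -
    let ?z = "zS S"
    have "blinfun_apply (S + t *\<^sub>R T) ?z = blinfun_apply S ?z + (t * blinfun_apply f ?z) *\<^sub>R y"
      by (simp add: plus_blinfun.rep_eq scaleR_blinfun.rep_eq T_def rank_one_apply)
    moreover have "norm (blinfun_apply S ?z + (t * blinfun_apply f ?z) *\<^sub>R y)
        \<ge> (1 - \<delta>) * (norm (blinfun_apply S ?z) + \<bar>t * blinfun_apply f ?z\<bar>)"
      using yo S span_base[of "blinfun_apply S ?z" "(\<lambda>S. blinfun_apply S (zS S)) ` N"] by blast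
    moreover have "norm (blinfun_apply S ?z) + \<bar>t * blinfun_apply f ?z\<bar> \<ge> (1 - 4*\<delta>) * (1 + \<bar>t\<bar>)"
    proof -
      have "\<bar>t * blinfun_apply f ?z\<bar> = \<bar>t\<bar> * blinfun_apply f ?z" using zS[OF S] dp
        by (simp add: abs_mult)
      also have "\<dots> \<ge> \<bar>t\<bar> * (1 - 4*\<delta>)" using zS[OF S] by (intro mult_left_mono) auto
      finally show ?thesis using Sz[OF S] by (simp add: algebra_simps)
    qed
    ultimately have "norm (blinfun_apply (S + t *\<^sub>R T) ?z) \<ge> (1 - \<delta>) * ((1 - 4*\<delta>) * (1 + \<bar>t\<bar>))"
    proof -
      assume e: "blinfun_apply (S + t *\<^sub>R T) ?z = blinfun_apply S ?z + (t * blinfun_apply f ?z) *\<^sub>R y"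
        and i1: "(1 - \<delta>) * (norm (blinfun_apply S ?z) + \<bar>t * blinfun_apply f ?z\<bar>) \<le> norm (blinfun_apply S ?z + (t * blinfun_apply f ?z) *\<^sub>R y)"
        and i2: "(1 - 4*\<delta>) * (1 + \<bar>t\<bar>) \<le> norm (blinfun_apply S ?z) + \<bar>t * blinfun_apply f ?z\<bar>"
      have "(1 - \<delta>) * ((1 - 4*\<delta>) * (1 + \<bar>t\<bar>)) \<le> (1 - \<delta>) * (norm (blinfun_apply S ?z) + \<bar>t * blinfun_apply f ?z\<bar>)"
        using dp i2 by (intro mult_left_mono) auto
      thus ?thesis using i1 e by simp
    qed
    moreover have "(1 - \<delta>) * ((1 - 4*\<delta>) * (1 + \<bar>t\<bar>)) \<ge> (1 - 5*\<delta>) * (1 + \<bar>t\<bar>)"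
    proof -
      have "(1 - \<delta>) * (1 - 4*\<delta>) \<ge> 1 - 5*\<delta>" using dp by (simp add: algebra_simps)
      hence "((1 - \<delta>) * (1 - 4*\<delta>)) * (1 + \<bar>t\<bar>) \<ge> (1 - 5*\<delta>) * (1 + \<bar>t\<bar>)"
        by (intro mult_right_mono) auto
      thus ?thesis by (simp add: mult.assoc)
    qed
    moreover have "norm (blinfun_apply (S + t *\<^sub>R T) ?z) \<le> norm (S + t *\<^sub>R T)"
      using zS[OF S] by (intro apply_le) auto
    ultimately show ?thesis by linarith
  qed
  show "\<exists>y\<in>H. norm y = 1 \<and> (\<forall>x\<in>span F. \<forall>t. (1 - \<epsilon>) * (norm x + \<bar>t\<bar>) \<le> norm (x + t *\<^sub>R y))"
  proof (intro bexI[OF _ TH] conjI nT ballI allI)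
    fix S t assume S: "S \<in> span F"
    show "(1 - \<epsilon>) * (norm S + \<bar>t\<bar>) \<le> norm (S + t *\<^sub>R T)"
    proof (cases "S = 0")
      case True
      have "(1 - \<epsilon>) * \<bar>t\<bar> \<le> 1 * \<bar>t\<bar>" using ep by (intro mult_right_mono) auto
      thus ?thesis using nT True by simp
    next
      case False
      define r where "r = norm S"
      have rp: "r > 0" using False r_def by simp
      have "(1/r) *\<^sub>R S \<in> K0" unfolding K0_def using S rp r_def by (auto intro: span_scale)
      then obtain S0 where S0: "S0 \<in> N" "dist S0 ((1/r) *\<^sub>R S) < \<delta>" using cov by auto
      have "(1 - 5*\<delta>) * (1 + \<bar>t/r\<bar>) \<le> norm (S0 + (t/r) *\<^sub>R T)" by (rule claim1[OF S0(1)])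
      also have "\<dots> \<le> norm ((1/r) *\<^sub>R S + (t/r) *\<^sub>R T) + norm (S0 - (1/r) *\<^sub>R S)"
        using norm_triangle_ineq[of "(1/r) *\<^sub>R S + (t/r) *\<^sub>R T" "S0 - (1/r) *\<^sub>R S"]
        by (simp add: algebra_simps)
      also have "\<dots> \<le> norm ((1/r) *\<^sub>R S + (t/r) *\<^sub>R T) + \<delta>"
        using S0(2) by (simp add: dist_norm)
      also have "(1/r) *\<^sub>R S + (t/r) *\<^sub>R T = (1/r) *\<^sub>R (S + t *\<^sub>R T)"
        by (simp add: algebra_simps)
      also have "norm \<dots> = norm (S + t *\<^sub>R T) / r" using rp by simp
      finally have "(1 - 5*\<delta>) * (1 + \<bar>t\<bar>/r) \<le> norm (S + t *\<^sub>R T) / r + \<delta>" using rp by simp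
      hence "r * ((1 - 5*\<delta>) * (1 + \<bar>t\<bar>/r)) \<le> r * (norm (S + t *\<^sub>R T) / r + \<delta>)"
        using rp by (intro mult_left_mono) auto
      moreover have "r * ((1 - 5*\<delta>) * (1 + \<bar>t\<bar>/r)) = (1 - 5*\<delta>) * (r + \<bar>t\<bar>)"
        using rp by (simp add: field_simps)
      moreover have "r * (norm (S + t *\<^sub>R T) / r + \<delta>) = norm (S + t *\<^sub>R T) + r * \<delta>"
        using rp by (simp add: field_simps)
      ultimately have "(1 - 5*\<delta>) * (r + \<bar>t\<bar>) \<le> norm (S + t *\<^sub>R T) + r * \<delta>"
        by simp
      moreover have "(1 - \<epsilon>) * (r + \<bar>t\<bar>) \<le> (1 - 5*\<delta>) * (r + \<bar>t\<bar>) - r * \<delta>"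
      proof -
        have "(1 - \<epsilon>) * (r + \<bar>t\<bar>) \<le> (1 - 6*\<delta>) * (r + \<bar>t\<bar>)"
          using dp rp by (intro mult_right_mono) auto
        moreover have "\<delta> * r \<le> \<delta> * (r + \<bar>t\<bar>)" using dp by (intro mult_left_mono) auto
        ultimately show ?thesis by (simp add: algebra_simps)
      qed
      ultimately show ?thesis unfolding r_def by linarith
    qed
  qed
qed

end
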